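(* If $f:K\to L$ is a $\times$-homotopy equivalence of simplicial complexes, then $\mathrm{Sing}(f):\mathrm{Sing}(K)\to\mathrm{Sing}(L)$ is a weak equivalence of simplicial sets (Kan–Quillen).
   Context: A simplicial complex $K$ consists of a set $V(K)$ and a collection of nonempty finite subsets (simplices) containing all singletons and closed under nonempty subsets; maps are vertex functions sending simplices to simplices; $\mathbf{Cpx}$ is the category. The product $K\times L$ has vertex set $V(K)\times V(L)$, a finite set being a simplex iff both of its projections are simplices. $I_n$ ($n\ge1$) is the complex on $\{0,\dots,n\}$ whose simplices are singletons and the edges $\{i,i+1\}$. Two maps $f,g:K\to L$ are $\times$-homotopic if for some $n\ge1$ there is a map $H:K\times I_n\to L$ with $H(-,0)=f$ and $H(-,n)=g$. A map $f:K\to L$ is a $\times$-homotopy equivalence if there is $g:L\to K$ with $gf$ $\times$-homotopic to $1_K$ and $fg$ $\times$-homotopic to $1_L$. $\mathbf{\Delta}^n$ is the complex on $\{0,\dots,n\}$ with all nonempty subsets simplices and $\mathrm{Sing}(K)_n=\mathbf{Cpx}(\mathbf{\Delta}^n,K)$ with simplicial operators by precomposition. *)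

theory Defs
  imports "HOL-Analysis.Analysis" "HOL-Homology.Simplices"
begin

type_synonym 'v cpx = "'v set \<times> 'v set set"

definition verts :: "'v cpx \<Rightarrow> 'v set" where "verts K = fst K"
definition simps :: "'v cpx \<Rightarrow> 'v set set" where "simps K = snd K"

definition is_cpx :: "'v cpx \<Rightarrow> bool" where
  "is_cpx K \<longleftrightarrow>
     (\<forall>s\<in>simps K. s \<noteq> {} \<and> finite s \<and> s \<subseteq> verts K) \<and>
     (\<forall>v\<in>verts K. {v} \<in> simps K) \<and>
     (\<forall>s\<in>simps K. \<forall>t. t \<noteq> {} \<and> t \<subseteq> s \<longrightarrow> t \<in> simps K)"

definition cpx_map :: "'v cpx \<Rightarrow> 'w cpx \<Rightarrow> ('v \<Rightarrow> 'w) \<Rightarrow> bool" where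
  "cpx_map K L f \<longleftrightarrow> (\<forall>v\<in>verts K. f v \<in> verts L) \<and> (\<forall>s\<in>simps K. f ` s \<in> simps L)"

definition cpx_prod :: "'v cpx \<Rightarrow> 'w cpx \<Rightarrow> ('v \<times> 'w) cpx" where
  "cpx_prod K L = (verts K \<times> verts L,
     {s. s \<noteq> {} \<and> finite s \<and> s \<subseteq> verts K \<times> verts L \<and>
         fst ` s \<in> simps K \<and> snd ` s \<in> simps L})"

definition interval_cpx :: "nat \<Rightarrow> nat cpx" where
  "interval_cpx n = ({0..n}, {{i} | i. i \<le> n} \<union> {{i, i+1} | i. i < n})"

definition times_homotopic :: "'v cpx \<Rightarrow> 'w cpx \<Rightarrow> ('v \<Rightarrow> 'w) \<Rightarrow> ('v \<Rightarrow> 'w) \<Rightarrow> bool" where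
  "times_homotopic K L f g \<longleftrightarrow>
     (\<exists>n\<ge>1. \<exists>H. cpx_map (cpx_prod K (interval_cpx n)) L H \<and>
        (\<forall>v\<in>verts K. H (v, 0) = f v \<and> H (v, n) = g v))"

definition times_htpy_equiv :: "'v cpx \<Rightarrow> 'w cpx \<Rightarrow> ('v \<Rightarrow> 'w) \<Rightarrow> bool" where
  "times_htpy_equiv K L f \<longleftrightarrow> cpx_map K L f \<and>
     (\<exists>g. cpx_map L K g \<and> times_homotopic K K (g \<circ> f) id \<and> times_homotopic L L (f \<circ> g) id)"

definition full_simplex :: "nat \<Rightarrow> nat cpx" where
  "full_simplex n = ({0..n}, {s. s \<noteq> {} \<and> s \<subseteq> {0..n}})"

text \<open>A simplicial set is given by its sets of n-simplices X n and the action
  act m n \<theta> : X n \<rightarrow> X m of simplicial operators, i.e. monotone maps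
  \<theta> : [m] \<rightarrow> [n] (represented by functions nat \<Rightarrow> nat; only values on {0..m} matter).\<close>
type_synonym 'a sset = "(nat \<Rightarrow> 'a set) \<times> (nat \<Rightarrow> nat \<Rightarrow> (nat \<Rightarrow> nat) \<Rightarrow> 'a \<Rightarrow> 'a)"

definition ssimp :: "'a sset \<Rightarrow> nat \<Rightarrow> 'a set" where "ssimp X = fst X"
definition sact :: "'a sset \<Rightarrow> nat \<Rightarrow> nat \<Rightarrow> (nat \<Rightarrow> nat) \<Rightarrow> 'a \<Rightarrow> 'a" where "sact X = snd X"

definition simp_op :: "nat \<Rightarrow> nat \<Rightarrow> (nat \<Rightarrow> nat) \<Rightarrow> bool" where
  "simp_op m n \<theta> \<longleftrightarrow> mono_on {0..m} \<theta> \<and> \<theta> ` {0..m} \<subseteq> {0..n}"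

text \<open>Singular simplicial set of a complex: Sing(K)_n = Cpx(Delta^n, K), with maps
  normalised to be undefined outside {0..n}; operators act by precomposition.\<close>
definition Sing :: "'v cpx \<Rightarrow> (nat \<Rightarrow> 'v) sset" where
  "Sing K = ((\<lambda>n. {\<sigma>. cpx_map (full_simplex n) K \<sigma> \<and> (\<forall>i>n. \<sigma> i = undefined)}),
             (\<lambda>m n \<theta> \<sigma>. (\<lambda>i. if i \<le> m then \<sigma> (\<theta> i) else undefined)))"

definition Sing_map :: "('v \<Rightarrow> 'w) \<Rightarrow> nat \<Rightarrow> (nat \<Rightarrow> 'v) \<Rightarrow> (nat \<Rightarrow> 'w)" where
  "Sing_map f n \<sigma> = (\<lambda>i. if i \<le> n then f (\<sigma> i) else undefined)"

definition simplex_top :: "nat \<Rightarrow> (nat \<Rightarrow> real) topology" where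
  "simplex_top n = subtopology (powertop_real UNIV) (standard_simplex n)"

text \<open>Induced affine map \<theta>_* : Delta^m \<rightarrow> Delta^n on barycentric coordinates.\<close>
definition simplex_push :: "nat \<Rightarrow> (nat \<Rightarrow> nat) \<Rightarrow> (nat \<Rightarrow> real) \<Rightarrow> (nat \<Rightarrow> real)" where
  "simplex_push m \<theta> t = (\<lambda>j. \<Sum>i\<in>{i. i \<le> m \<and> \<theta> i = j}. t i)"

definition real_pre :: "'a sset \<Rightarrow> (nat \<times> ('a \<times> (nat \<Rightarrow> real))) topology" where
  "real_pre X = sum_topology (\<lambda>n. prod_topology (discrete_topology (ssimp X n)) (simplex_top n)) UNIV"

definition real_gen :: "'a sset \<Rightarrow> ((nat \<times> ('a \<times> (nat \<Rightarrow> real))) \<times> (nat \<times> ('a \<times> (nat \<Rightarrow> real)))) set" where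
  "real_gen X = {((m, (sact X m n \<theta> x, t)), (n, (x, simplex_push m \<theta> t))) | m n \<theta> x t.
      simp_op m n \<theta> \<and> x \<in> ssimp X n \<and> t \<in> standard_simplex m}"

definition real_rel :: "'a sset \<Rightarrow> ((nat \<times> ('a \<times> (nat \<Rightarrow> real))) \<times> (nat \<times> ('a \<times> (nat \<Rightarrow> real)))) set" where
  "real_rel X = (Id_on (topspace (real_pre X)) \<union>
      (real_gen X \<inter> (topspace (real_pre X) \<times> topspace (real_pre X))) \<union>
      (real_gen X \<inter> (topspace (real_pre X) \<times> topspace (real_pre X)))\<inverse>)\<^sup>*"

definition quotient_topology :: "'p topology \<Rightarrow> ('p \<times> 'p) set \<Rightarrow> 'p set topology" where
  "quotient_topology T R = topology (\<lambda>U. U \<subseteq> topspace T // R \<and> openin T (\<Union>U))"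

definition realization :: "'a sset \<Rightarrow> (nat \<times> ('a \<times> (nat \<Rightarrow> real))) set topology" where
  "realization X = quotient_topology (real_pre X) (real_rel X)"

definition realization_map :: "'b sset \<Rightarrow> (nat \<Rightarrow> 'a \<Rightarrow> 'b) \<Rightarrow>
    (nat \<times> ('a \<times> (nat \<Rightarrow> real))) set \<Rightarrow> (nat \<times> ('b \<times> (nat \<Rightarrow> real))) set" where
  "realization_map Y f C = real_rel Y `` ((\<lambda>(n, (x, t)). (n, (f n x, t))) ` C)"

text \<open>Weak equivalence of simplicial sets (Kan--Quillen): the geometric realization
  of the map is a homotopy equivalence.\<close>
definition sset_weak_equiv :: "'a sset \<Rightarrow> 'b sset \<Rightarrow> (nat \<Rightarrow> 'a \<Rightarrow> 'b) \<Rightarrow> bool" where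
  "sset_weak_equiv X Y f \<longleftrightarrow>
     (let F = realization_map Y f in
       continuous_map (realization X) (realization Y) F \<and>
       (\<exists>G. continuous_map (realization Y) (realization X) G \<and>
            homotopic_with (\<lambda>h. True) (realization X) (realization X) (G \<circ> F) id \<and>
            homotopic_with (\<lambda>h. True) (realization Y) (realization Y) (F \<circ> G) id))"

end

theory Submission
  imports Defs
begin


lemma rtr_closed:
  assumes G: "G \<subseteq> S \<times> S" and xy: "(x,y) \<in> (Id_on S \<union> G \<union> G\<inverse>)\<^sup>*" and x: "x \<in> S"
  shows "y \<in> S"
  using xy x by induction (use G in auto)

lemma rtr_sym:
  assumes xy: "(x,y) \<in> (Id_on S \<union> G \<union> G\<inverse>)\<^sup>*"
  shows "(y,x) \<in> (Id_on S \<union> G \<union> G\<inverse>)\<^sup>*"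
proof -
  have "sym (Id_on S \<union> G \<union> G\<inverse>)" by (auto simp: sym_def)
  then have "sym ((Id_on S \<union> G \<union> G\<inverse>)\<^sup>*)" by (rule sym_rtrancl)
  then show ?thesis using xy by (auto dest: symD)
qed

definition cls :: "'a sset \<Rightarrow> (nat \<times> ('a \<times> (nat \<Rightarrow> real))) \<Rightarrow> (nat \<times> ('a \<times> (nat \<Rightarrow> real))) set" where
  "cls X p = real_rel X `` {p}"

lemma topspace_real_pre:
  "topspace (real_pre X) = {(n,(x,t)). x \<in> ssimp X n \<and> t \<in> standard_simplex n}"
  by (auto simp: real_pre_def simplex_top_def)

lemma real_rel_closed:
  assumes "(x,y) \<in> real_rel X" "x \<in> topspace (real_pre X)" shows "y \<in> topspace (real_pre X)"
  using assms unfolding real_rel_def by (rule rtr_closed[rotated]) auto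

lemma real_rel_sym:
  assumes "(x,y) \<in> real_rel X" shows "(y,x) \<in> real_rel X"
  using assms unfolding real_rel_def by (rule rtr_sym)

lemma real_rel_trans:
  assumes "(x,y) \<in> real_rel X" "(y,z) \<in> real_rel X" shows "(x,z) \<in> real_rel X"
  using assms unfolding real_rel_def by (rule rtrancl_trans)

lemma real_rel_refl: "(x,x) \<in> real_rel X"
  unfolding real_rel_def by simp

lemma real_rel_gen:
  assumes "(x,y) \<in> real_gen X" "x \<in> topspace (real_pre X)" "y \<in> topspace (real_pre X)"
  shows "(x,y) \<in> real_rel X"
  using assms unfolding real_rel_def by (intro r_into_rtrancl) auto

lemma cls_self: "p \<in> cls X p"
  by (simp add: cls_def real_rel_refl)

lemma cls_eq_iff: "cls X p = cls X q \<longleftrightarrow> (p,q) \<in> real_rel X"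
proof
  assume "cls X p = cls X q"
  then have "q \<in> cls X p" using cls_self by metis
  then show "(p,q) \<in> real_rel X" by (simp add: cls_def)
next
  assume pq: "(p,q) \<in> real_rel X"
  have "z \<in> cls X p \<longleftrightarrow> z \<in> cls X q" for z
      unfolding cls_def Image_singleton_iff
      using pq real_rel_trans[of q p X z] real_rel_trans[of p q X z] real_rel_sym[OF pq] by blast
  then show "cls X p = cls X q" by (simp add: set_eq_iff)
qed

lemma cls_eqI: "q \<in> cls X p \<Longrightarrow> cls X q = cls X p"
  unfolding cls_eq_iff by (rule real_rel_sym) (simp add: cls_def)

lemma cls_sub: "p \<in> topspace (real_pre X) \<Longrightarrow> cls X p \<subseteq> topspace (real_pre X)"
proof
  fix z assume "p \<in> topspace (real_pre X)" "z \<in> cls X p"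
  then show "z \<in> topspace (real_pre X)" using real_rel_closed[of p z X] by (simp add: cls_def)
qed

lemma quot_cls: "topspace (real_pre X) // real_rel X = cls X ` topspace (real_pre X)"
  by (auto simp: quotient_def cls_def)

lemma is_quot_top:
  "istopology (\<lambda>U. U \<subseteq> topspace (real_pre X) // real_rel X \<and> openin (real_pre X) (\<Union>U))"
proof -
  have 1: "S \<inter> T \<subseteq> topspace (real_pre X) // real_rel X \<and> openin (real_pre X) (\<Union> (S \<inter> T))"
    if S: "S \<subseteq> topspace (real_pre X) // real_rel X \<and> openin (real_pre X) (\<Union> S)"
    and T: "T \<subseteq> topspace (real_pre X) // real_rel X \<and> openin (real_pre X) (\<Union> T)" for S T
  proof -
  have "\<Union>(S \<inter> T) = \<Union>S \<inter> \<Union>T"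
  proof
    show "\<Union> S \<inter> \<Union> T \<subseteq> \<Union> (S \<inter> T)"
    proof
      fix x assume "x \<in> \<Union> S \<inter> \<Union> T"
      then obtain A B where A: "A \<in> S" "x \<in> A" and B: "B \<in> T" "x \<in> B" by auto
      obtain a where a: "A = cls X a" using A S quot_cls by blast
      obtain b where b: "B = cls X b" using B T quot_cls by blast
      have "A = B" using a b A B cls_eqI by metis
      then show "x \<in> \<Union> (S \<inter> T)" using A B by auto
    qed
  qed auto
  then show ?thesis
    using S T by auto
  qed
  have 2: "\<Union> K \<subseteq> topspace (real_pre X) // real_rel X \<and> openin (real_pre X) (\<Union> (\<Union> K))"
    if K: "\<forall>S\<in>K. S \<subseteq> topspace (real_pre X) // real_rel X \<and> openin (real_pre X) (\<Union> S)" for K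
  proof -
    have "\<Union>(\<Union>K) = (\<Union>S\<in>K. \<Union>S)" by auto
    moreover have "openin (real_pre X) (\<Union>S\<in>K. \<Union>S)" using K by (intro openin_Union) auto
    ultimately show ?thesis using K by auto
  qed
  show ?thesis unfolding istopology_def using 1 2 by blast
qed

lemma openin_realization:
  "openin (realization X) U \<longleftrightarrow> U \<subseteq> topspace (real_pre X) // real_rel X \<and> openin (real_pre X) (\<Union>U)"
  unfolding realization_def quotient_topology_def by (simp add: topology_inverse'[OF is_quot_top])

lemma Union_quot: "\<Union>(topspace (real_pre X) // real_rel X) = topspace (real_pre X)"
  unfolding quot_cls using cls_sub cls_self by fastforce

lemma topspace_realization: "topspace (realization X) = topspace (real_pre X) // real_rel X"
proof -
  have "openin (realization X) (topspace (real_pre X) // real_rel X)"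
    unfolding openin_realization Union_quot by simp
  then show ?thesis
    by (metis openin_realization openin_subset openin_topspace subset_antisym)
qed

lemma quotient_map_cls: "quotient_map (real_pre X) (realization X) (cls X)"
  unfolding quotient_map_def
proof (intro conjI allI impI)
  show "cls X ` topspace (real_pre X) = topspace (realization X)"
    by (simp add: topspace_realization quot_cls)
  fix U assume U: "U \<subseteq> topspace (realization X)"
  have "{x \<in> topspace (real_pre X). cls X x \<in> U} = \<Union>U"
  proof
    show "\<Union> U \<subseteq> {x \<in> topspace (real_pre X). cls X x \<in> U}"
    proof
      fix x assume "x \<in> \<Union>U"
      then obtain A where A: "A \<in> U" "x \<in> A" by auto
      obtain a where a: "A = cls X a" "a \<in> topspace (real_pre X)"
        using A U unfolding topspace_realization quot_cls by blast
      have xa: "x \<in> cls X a" using A a by simp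
      then have "cls X x = A" using cls_eqI[OF xa] a(1) by simp
      moreover have "x \<in> topspace (real_pre X)" using cls_sub[OF a(2)] xa by blast
      ultimately show "x \<in> {x \<in> topspace (real_pre X). cls X x \<in> U}"
        using A by simp
    qed
  qed (auto intro: cls_self)
  then show "openin (real_pre X) {x \<in> topspace (real_pre X). cls X x \<in> U} = openin (realization X) U"
    using U by (simp add: openin_realization topspace_realization)
qed



lemma cont_sum_discrete:
  assumes "\<And>n a. a \<in> A n \<Longrightarrow> continuous_map (S n) Y (\<lambda>t. f (n,(a,t)))"
  shows "continuous_map (sum_topology (\<lambda>n. prod_topology (discrete_topology (A n)) (S n)) UNIV) Y f"
  unfolding continuous_map_def
proof (intro conjI allI impI)
  show "f \<in> topspace (sum_topology (\<lambda>n. prod_topology (discrete_topology (A n)) (S n)) UNIV) \<rightarrow> topspace Y"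
    using assms by (fastforce simp: continuous_map_def)
  fix U assume U: "openin Y U"
  let ?T = "sum_topology (\<lambda>n. prod_topology (discrete_topology (A n)) (S n)) UNIV"
  show "openin ?T {x \<in> topspace ?T. f x \<in> U}"
  proof (subst openin_subopen, intro ballI)
    fix p assume p: "p \<in> {x \<in> topspace ?T. f x \<in> U}"
    then obtain n a t where pe: "p = (n,(a,t))" and a: "a \<in> A n" and t: "t \<in> topspace (S n)" and fp: "f (n,(a,t)) \<in> U"
      by auto
    define W where "W = {t' \<in> topspace (S n). f (n,(a,t')) \<in> U}"
    have W: "openin (S n) W" unfolding W_def using assms[OF a] U by (rule openin_continuous_map_preimage)
    have "openin ?T ({n} \<times> ({a} \<times> W))"
      unfolding openin_sum_topology
    proof (intro conjI ballI)
      show "{n} \<times> ({a} \<times> W) \<subseteq> Sigma UNIV (topspace \<circ> (\<lambda>n. prod_topology (discrete_topology (A n)) (S n)))"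
        using a by (auto simp: W_def)
      fix i
      show "openin (prod_topology (discrete_topology (A i)) (S i)) {x. (i, x) \<in> {n} \<times> ({a} \<times> W)}"
      proof (cases "i = n")
        case True
        have "{x. (i, x) \<in> {n} \<times> ({a} \<times> W)} = {a} \<times> W" using True by auto
        then show ?thesis using True W a by (simp add: openin_prod_Times_iff)
      next
        case False
        then show ?thesis by simp
      qed
    qed
    moreover have "p \<in> {n} \<times> ({a} \<times> W)" using pe t fp by (simp add: W_def)
    moreover have "{n} \<times> ({a} \<times> W) \<subseteq> {x \<in> topspace ?T. f x \<in> U}"
      using a by (auto simp: W_def)
    ultimately show "\<exists>T. openin ?T T \<and> p \<in> T \<and> T \<subseteq> {x \<in> topspace ?T. f x \<in> U}" by blast
  qed
qed

lemma cont_prod_sum_discrete: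
  assumes "\<And>n a. a \<in> A n \<Longrightarrow> continuous_map (prod_topology Z (S n)) Y (\<lambda>(z,t). f (z,(n,(a,t))))"
  shows "continuous_map (prod_topology Z (sum_topology (\<lambda>n. prod_topology (discrete_topology (A n)) (S n)) UNIV)) Y f"
  unfolding continuous_map_def
proof (intro conjI allI impI)
  let ?T = "sum_topology (\<lambda>n. prod_topology (discrete_topology (A n)) (S n)) UNIV"
  show "f \<in> topspace (prod_topology Z ?T) \<rightarrow> topspace Y"
  proof
    fix p assume "p \<in> topspace (prod_topology Z ?T)"
    then obtain z n a t where pe: "p = (z,(n,(a,t)))" and a: "a \<in> A n" and t: "t \<in> topspace (S n)" and z: "z \<in> topspace Z"
      by auto
    show "f p \<in> topspace Y"
      using continuous_map_image_subset_topspace[OF assms[OF a]] z t pe by force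
  qed
  fix U assume U: "openin Y U"
  show "openin (prod_topology Z ?T) {x \<in> topspace (prod_topology Z ?T). f x \<in> U}"
  proof (subst openin_subopen, intro ballI)
    fix p assume p: "p \<in> {x \<in> topspace (prod_topology Z ?T). f x \<in> U}"
    then obtain z n a t where pe: "p = (z,(n,(a,t)))" and a: "a \<in> A n" and t: "t \<in> topspace (S n)"
      and z: "z \<in> topspace Z" and fp: "f (z,(n,(a,t))) \<in> U"
      by auto
    define W where "W = {q \<in> topspace (prod_topology Z (S n)). (\<lambda>(z,t). f (z,(n,(a,t)))) q \<in> U}"
    have W: "openin (prod_topology Z (S n)) W" unfolding W_def using assms[OF a] U by (rule openin_continuous_map_preimage)
    have "(z,t) \<in> W" using z t fp by (simp add: W_def)
    then obtain U1 V1 where U1: "openin Z U1" and V1: "openin (S n) V1" and zt: "z \<in> U1" "t \<in> V1"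
      and sub: "U1 \<times> V1 \<subseteq> W"
      using W by (metis openin_prod_topology_alt)
    have "openin ?T ({n} \<times> ({a} \<times> V1))"
      unfolding openin_sum_topology
    proof (intro conjI ballI)
      show "{n} \<times> ({a} \<times> V1) \<subseteq> Sigma UNIV (topspace \<circ> (\<lambda>n. prod_topology (discrete_topology (A n)) (S n)))"
        using a openin_subset[OF V1] by auto
      fix i
      show "openin (prod_topology (discrete_topology (A i)) (S i)) {x. (i, x) \<in> {n} \<times> ({a} \<times> V1)}"
      proof (cases "i = n")
        case True
        have "{x. (i, x) \<in> {n} \<times> ({a} \<times> V1)} = {a} \<times> V1" using True by auto
        then show ?thesis using True V1 a by (simp add: openin_prod_Times_iff)
      next
        case False
        then show ?thesis by simp
      qed
    qed
    then have op: "openin (prod_topology Z ?T) (U1 \<times> ({n} \<times> ({a} \<times> V1)))"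
      using U1 by (simp add: openin_prod_Times_iff)
    moreover have "p \<in> U1 \<times> ({n} \<times> ({a} \<times> V1))" using pe zt by simp
    moreover have "U1 \<times> ({n} \<times> ({a} \<times> V1)) \<subseteq> {x \<in> topspace (prod_topology Z ?T). f x \<in> U}"
    proof
      fix q assume q: "q \<in> U1 \<times> ({n} \<times> ({a} \<times> V1))"
      then obtain z' t' where qe: "q = (z',(n,(a,t')))" and "z' \<in> U1" "t' \<in> V1" by auto
      then have "(z',t') \<in> W" using sub by auto
      then show "q \<in> {x \<in> topspace (prod_topology Z ?T). f x \<in> U}"
        using qe a by (auto simp: W_def)
    qed
    ultimately show "\<exists>T. openin (prod_topology Z ?T) T \<and> p \<in> T \<and> T \<subseteq> {x \<in> topspace (prod_topology Z ?T). f x \<in> U}" by blast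
  qed
qed

definition sset_hom :: "'a sset \<Rightarrow> 'b sset \<Rightarrow> (nat \<Rightarrow> 'a \<Rightarrow> 'b) \<Rightarrow> bool" where
  "sset_hom X Y \<phi> \<longleftrightarrow> (\<forall>n x. x \<in> ssimp X n \<longrightarrow> \<phi> n x \<in> ssimp Y n) \<and>
     (\<forall>m n \<theta> x. simp_op m n \<theta> \<and> x \<in> ssimp X n \<longrightarrow> \<phi> m (sact X m n \<theta> x) = sact Y m n \<theta> (\<phi> n x))"

definition psi :: "(nat \<Rightarrow> 'a \<Rightarrow> 'b) \<Rightarrow> nat \<times> ('a \<times> (nat \<Rightarrow> real)) \<Rightarrow> nat \<times> ('b \<times> (nat \<Rightarrow> real))" where
  "psi \<phi> = (\<lambda>(n, (x, t)). (n, (\<phi> n x, t)))"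

lemma psi_simp [simp]: "psi \<phi> (n,(x,t)) = (n,(\<phi> n x, t))"
  by (simp add: psi_def)

lemma psi_topspace:
  assumes "sset_hom X Y \<phi>" "p \<in> topspace (real_pre X)" shows "psi \<phi> p \<in> topspace (real_pre Y)"
  using assms by (auto simp: topspace_real_pre sset_hom_def)

lemma psi_gen:
  assumes h: "sset_hom X Y \<phi>" and g: "(p,q) \<in> real_gen X"
  shows "(psi \<phi> p, psi \<phi> q) \<in> real_gen Y"
proof -
  obtain m n \<theta> x t where pe: "p = (m, (sact X m n \<theta> x, t))" and qe: "q = (n, (x, simplex_push m \<theta> t))"
    and th: "simp_op m n \<theta>" and x: "x \<in> ssimp X n" and t: "t \<in> standard_simplex m"
    using g unfolding real_gen_def by blast
  have "\<phi> m (sact X m n \<theta> x) = sact Y m n \<theta> (\<phi> n x)" using h th x by (simp add: sset_hom_def)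
  moreover have "\<phi> n x \<in> ssimp Y n" using h x by (simp add: sset_hom_def)
  ultimately show ?thesis unfolding pe qe real_gen_def using th t by fastforce
qed

lemma real_rel_induct_step:
  assumes "(y,z) \<in> Id_on (topspace (real_pre X)) \<union>
      (real_gen X \<inter> (topspace (real_pre X) \<times> topspace (real_pre X))) \<union>
      (real_gen X \<inter> (topspace (real_pre X) \<times> topspace (real_pre X)))\<inverse>"
  shows "y = z \<or> ((y,z) \<in> real_gen X \<and> y \<in> topspace (real_pre X) \<and> z \<in> topspace (real_pre X)) \<or>
        ((z,y) \<in> real_gen X \<and> y \<in> topspace (real_pre X) \<and> z \<in> topspace (real_pre X))"
  using assms by auto

lemma real_rel_invariant:
  assumes "(x,y) \<in> real_rel X"
    and "\<And>p q. (p,q) \<in> real_gen X \<Longrightarrow> p \<in> topspace (real_pre X) \<Longrightarrow> q \<in> topspace (real_pre X) \<Longrightarrow> F p = F q"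
  shows "F x = F y"
  using assms(1) unfolding real_rel_def
proof (induction rule: rtrancl_induct)
  case base then show ?case by simp
next
  case (step y z)
  from real_rel_induct_step[OF step(2)] show ?case
    using step(3) assms(2) by metis
qed

lemma psi_rel:
  assumes h: "sset_hom X Y \<phi>" and r: "(p,q) \<in> real_rel X" and p: "p \<in> topspace (real_pre X)"
  shows "(psi \<phi> p, psi \<phi> q) \<in> real_rel Y"
proof -
  have "cls Y (psi \<phi> p) = cls Y (psi \<phi> q)"
  proof -
    have "(cls Y \<circ> psi \<phi>) p = (cls Y \<circ> psi \<phi>) q"
    proof (rule real_rel_invariant[OF r])
      fix a b assume ab: "(a,b) \<in> real_gen X" "a \<in> topspace (real_pre X)" "b \<in> topspace (real_pre X)"
      have "(psi \<phi> a, psi \<phi> b) \<in> real_rel Y"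
        using psi_gen[OF h ab(1)] psi_topspace[OF h ab(2)] psi_topspace[OF h ab(3)] by (rule real_rel_gen)
      then show "(cls Y \<circ> psi \<phi>) a = (cls Y \<circ> psi \<phi>) b" by (simp add: cls_eq_iff)
    qed
    then show ?thesis by simp
  qed
  then show ?thesis by (simp add: cls_eq_iff)
qed

lemma realization_map_cls:
  assumes h: "sset_hom X Y \<phi>" and p: "p \<in> topspace (real_pre X)"
  shows "realization_map Y \<phi> (cls X p) = cls Y (psi \<phi> p)"
proof -
  have rm: "realization_map Y \<phi> C = real_rel Y `` (psi \<phi> ` C)" for C
    unfolding realization_map_def psi_def by simp
  have sub: "psi \<phi> ` cls X p \<subseteq> cls Y (psi \<phi> p)"
    using psi_rel[OF h _ p] by (auto simp: cls_def)
  show ?thesis unfolding rm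
  proof
    show "real_rel Y `` psi \<phi> ` cls X p \<subseteq> cls Y (psi \<phi> p)"
    proof
      fix z assume "z \<in> real_rel Y `` psi \<phi> ` cls X p"
      then obtain w where w: "w \<in> psi \<phi> ` cls X p" "(w,z) \<in> real_rel Y" by auto
      then have "(psi \<phi> p, w) \<in> real_rel Y" using sub by (auto simp: cls_def)
      then show "z \<in> cls Y (psi \<phi> p)" using real_rel_trans[OF _ w(2)] by (simp add: cls_def)
    qed
    show "cls Y (psi \<phi> p) \<subseteq> real_rel Y `` psi \<phi> ` cls X p"
      using cls_self[of p X] by (auto simp: cls_def)
  qed
qed

lemma psi_cont:
  assumes h: "sset_hom X Y \<phi>"
  shows "continuous_map (real_pre X) (real_pre Y) (psi \<phi>)"
  unfolding real_pre_def
proof (rule cont_sum_discrete)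
  fix n a assume a: "a \<in> ssimp X n"
  have "continuous_map (simplex_top n) (prod_topology (discrete_topology (ssimp Y n)) (simplex_top n)) (\<lambda>t. (\<phi> n a, t))"
    using h a by (auto simp: continuous_map_pairwise o_def sset_hom_def)
  then show "continuous_map (simplex_top n) (sum_topology (\<lambda>n. prod_topology (discrete_topology (ssimp Y n)) (simplex_top n)) UNIV)
          (\<lambda>t. psi \<phi> (n, a, t))"
    using continuous_map_compose[OF _ continuous_map_component_injection[of n UNIV]] by (simp add: o_def)
qed

lemma cont_realization_map:
  assumes h: "sset_hom X Y \<phi>"
  shows "continuous_map (realization X) (realization Y) (realization_map Y \<phi>)"
proof (rule continuous_compose_quotient_map[OF quotient_map_cls])
  have "continuous_map (real_pre X) (realization Y) (cls Y \<circ> psi \<phi>)"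
    using psi_cont[OF h] quotient_imp_continuous_map[OF quotient_map_cls] by (rule continuous_map_compose)
  then show "continuous_map (real_pre X) (realization Y) (realization_map Y \<phi> \<circ> cls X)"
    by (rule continuous_map_eq) (simp add: realization_map_cls[OF h])
qed

lemma realization_map_cong:
  assumes "\<And>n x. x \<in> ssimp X n \<Longrightarrow> \<phi> n x = \<phi>' n x" "C \<in> topspace (realization X)"
  shows "realization_map Y \<phi> C = realization_map Y \<phi>' C"
proof -
  have "C \<subseteq> topspace (real_pre X)" using assms(2) Union_quot topspace_realization by blast
  then have "(\<lambda>(n, (x, t)). (n, (\<phi> n x, t))) ` C = (\<lambda>(n, (x, t)). (n, (\<phi>' n x, t))) ` C"
    using assms(1) by (intro image_cong) (auto simp: topspace_real_pre)
  then show ?thesis unfolding realization_map_def by simp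
qed

lemma realization_topspace_cls:
  assumes "C \<in> topspace (realization X)" obtains p where "p \<in> topspace (real_pre X)" "C = cls X p"
  using assms by (auto simp: topspace_realization quot_cls)



lemma ssimp_Sing: "ssimp (Sing K) n = {\<sigma>. cpx_map (full_simplex n) K \<sigma> \<and> (\<forall>i>n. \<sigma> i = undefined)}"
  by (simp add: ssimp_def Sing_def)

lemma sact_Sing: "sact (Sing K) m n \<theta> \<sigma> = (\<lambda>i. if i \<le> m then \<sigma> (\<theta> i) else undefined)"
  by (simp add: sact_def Sing_def)

lemma Sing_memD:
  assumes "\<sigma> \<in> ssimp (Sing K) n"
  shows "\<And>i. i \<le> n \<Longrightarrow> \<sigma> i \<in> verts K" "\<And>i. i > n \<Longrightarrow> \<sigma> i = undefined" "\<sigma> ` {0..n} \<in> simps K"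
proof -
  have c: "cpx_map (full_simplex n) K \<sigma>" and u: "\<forall>i>n. \<sigma> i = undefined" using assms by (auto simp: ssimp_Sing)
  show "\<And>i. i \<le> n \<Longrightarrow> \<sigma> i \<in> verts K" using c by (auto simp: cpx_map_def full_simplex_def verts_def)
  show "\<And>i. i > n \<Longrightarrow> \<sigma> i = undefined" using u by auto
  show "\<sigma> ` {0..n} \<in> simps K" using c by (auto simp: cpx_map_def full_simplex_def simps_def)
qed

lemma cpx_closed:
  assumes "is_cpx L" "s \<in> simps L" "t \<subseteq> s" "t \<noteq> {}" shows "t \<in> simps L"
  using assms unfolding is_cpx_def by blast

lemma Sing_memI:
  assumes L: "is_cpx L" and v: "\<And>i. i \<le> n \<Longrightarrow> \<tau> i \<in> verts L" and u: "\<And>i. i > n \<Longrightarrow> \<tau> i = undefined"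
    and s: "\<tau> ` {0..n} \<in> simps L"
  shows "\<tau> \<in> ssimp (Sing L) n"
proof -
  have "cpx_map (full_simplex n) L \<tau>"
    unfolding cpx_map_def
  proof (intro conjI ballI)
    fix v assume "v \<in> verts (full_simplex n)" then show "\<tau> v \<in> verts L" using v by (simp add: full_simplex_def verts_def)
  next
    fix s' assume "s' \<in> simps (full_simplex n)"
    then have ne: "s' \<noteq> {}" and sub: "s' \<subseteq> {0..n}" by (simp_all add: full_simplex_def simps_def)
    show "\<tau> ` s' \<in> simps L" using cpx_closed[OF L s, of "\<tau> ` s'"] image_mono[OF sub, of \<tau>] ne by simp
  qed
  then show ?thesis using u by (simp add: ssimp_Sing)
qed

lemma cpx_vert_simp: "is_cpx K \<Longrightarrow> v \<in> verts K \<Longrightarrow> {v} \<in> simps K"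
  unfolding is_cpx_def by blast

lemma cpx_simp_verts: "is_cpx K \<Longrightarrow> s \<in> simps K \<Longrightarrow> s \<subseteq> verts K"
  unfolding is_cpx_def by blast

lemma sset_hom_Sing:
  assumes L: "is_cpx L" and f: "cpx_map K L f"
  shows "sset_hom (Sing K) (Sing L) (Sing_map f)"
  unfolding sset_hom_def
proof (intro conjI allI impI)
  fix n \<sigma> assume \<sigma>: "\<sigma> \<in> ssimp (Sing K) n"
  show "Sing_map f n \<sigma> \<in> ssimp (Sing L) n"
  proof (rule Sing_memI[OF L])
    show "\<And>i. i \<le> n \<Longrightarrow> Sing_map f n \<sigma> i \<in> verts L"
      using Sing_memD(1)[OF \<sigma>] f by (auto simp: Sing_map_def cpx_map_def)
    show "\<And>i. i > n \<Longrightarrow> Sing_map f n \<sigma> i = undefined" by (simp add: Sing_map_def)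
    have "Sing_map f n \<sigma> ` {0..n} = f ` (\<sigma> ` {0..n})" by (auto simp: Sing_map_def)
    then show "Sing_map f n \<sigma> ` {0..n} \<in> simps L" using Sing_memD(3)[OF \<sigma>] f by (auto simp: cpx_map_def)
  qed
next
  fix m n \<theta> \<sigma> assume a: "simp_op m n \<theta> \<and> \<sigma> \<in> ssimp (Sing K) n"
  then have "\<And>i. i \<le> m \<Longrightarrow> \<theta> i \<le> n" unfolding simp_op_def by (auto simp: image_subset_iff)
  then show "Sing_map f m (sact (Sing K) m n \<theta> \<sigma>) = sact (Sing L) m n \<theta> (Sing_map f n \<sigma>)"
    by (auto simp: Sing_map_def sact_Sing)
qed

lemma Sing_map_comp: "Sing_map g n (Sing_map f n \<sigma>) = Sing_map (g \<circ> f) n \<sigma>"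
  by (auto simp: Sing_map_def)

lemma Sing_map_id: "\<sigma> \<in> ssimp (Sing K) n \<Longrightarrow> Sing_map id n \<sigma> = \<sigma>"
  using Sing_memD(2) by (fastforce simp: Sing_map_def)

lemma Sing_map_cong: "\<sigma> \<in> ssimp (Sing K) n \<Longrightarrow> (\<And>v. v \<in> verts K \<Longrightarrow> f v = g v) \<Longrightarrow> Sing_map f n \<sigma> = Sing_map g n \<sigma>"
  using Sing_memD(1) by (fastforce simp: Sing_map_def)

lemma sum_join: "(\<Sum>i\<le>2*m+1. g i) = (\<Sum>i\<le>m. g i) + (\<Sum>i\<le>m. g (i + Suc m))"
proof -
  have e: "2*m+1 = m + (m+1)" by simp
  have "(\<Sum>i\<le>2*m+1. g i) = (\<Sum>i\<in>{0..m + (m+1)}. g i)"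
    unfolding e by (simp only: atMost_atLeast0)
  also have "\<dots> = (\<Sum>i\<in>{0..m}. g i) + (\<Sum>i\<in>{m+1..m + (m+1)}. g i)"
    by (rule sum.ub_add_nat) simp
  also have "(\<Sum>i\<in>{m+1..m + (m+1)}. g i) = (\<Sum>i\<in>{0+(m+1)..m + (m+1)}. g i)" by simp
  also have "\<dots> = (\<Sum>i\<in>{0..m}. g (i + (m+1)))" by (rule sum.shift_bounds_cl_nat_ivl)
  finally show ?thesis by (simp add: atMost_atLeast0)
qed

definition joinp :: "nat \<Rightarrow> real \<Rightarrow> (nat \<Rightarrow> real) \<Rightarrow> (nat \<Rightarrow> real)" where
  "joinp m s t = (\<lambda>i. if i \<le> m then (1 - s) * t i else if i \<le> 2*m+1 then s * t (i - Suc m) else 0)"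

lemma joinp_ss:
  assumes t: "t \<in> standard_simplex m" and s: "0 \<le> s" "s \<le> 1"
  shows "joinp m s t \<in> standard_simplex (2*m+1)"
proof -
  have t0: "\<And>i. 0 \<le> t i" and t1: "\<And>i. t i \<le> 1" and tz: "\<And>i. i > m \<Longrightarrow> t i = 0" and ts: "(\<Sum>i\<le>m. t i) = 1"
    using t by (auto simp: standard_simplex_def)
  have "0 \<le> joinp m s t i \<and> joinp m s t i \<le> 1" for i
  proof -
    have a: "0 \<le> (1 - s) * t i" "(1-s) * t i \<le> 1" using s t0[of i] t1[of i] by (auto intro: mult_le_one)
    have b: "0 \<le> s * t (i - Suc m)" "s * t (i - Suc m) \<le> 1" using s t0[of "i - Suc m"] t1[of "i - Suc m"] by (auto intro: mult_le_one)
    show ?thesis using a b by (simp add: joinp_def)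
  qed
  moreover have "\<forall>i>2*m+1. joinp m s t i = 0" by (simp add: joinp_def)
  moreover have "(\<Sum>i\<le>2*m+1. joinp m s t i) = 1"
  proof -
    have "(\<Sum>i\<le>2*m+1. joinp m s t i) = (\<Sum>i\<le>m. (1 - s) * t i) + (\<Sum>i\<le>m. s * t i)"
      unfolding sum_join by (simp add: joinp_def)
    also have "\<dots> = 1" using ts by (simp add: sum_distrib_left[symmetric])
    finally show ?thesis .
  qed
  ultimately show ?thesis by (simp add: standard_simplex_def)
qed



definition tau :: "('v \<Rightarrow> 'w) \<Rightarrow> ('v \<Rightarrow> 'w) \<Rightarrow> nat \<Rightarrow> (nat \<Rightarrow> 'v) \<Rightarrow> (nat \<Rightarrow> 'w)" where
  "tau h0 h1 m \<sigma> = (\<lambda>i. if i \<le> m then h0 (\<sigma> i) else if i \<le> 2*m+1 then h1 (\<sigma> (i - Suc m)) else undefined)"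

definition contig :: "'v cpx \<Rightarrow> 'w cpx \<Rightarrow> ('v \<Rightarrow> 'w) \<Rightarrow> ('v \<Rightarrow> 'w) \<Rightarrow> bool" where
  "contig K L h0 h1 \<longleftrightarrow> (\<forall>s\<in>simps K. h0 ` s \<union> h1 ` s \<in> simps L)"

lemma contig_map:
  assumes K: "is_cpx K" and L: "is_cpx L" and c: "contig K L h0 h1"
  shows "cpx_map K L h0" "cpx_map K L h1"
proof -
  have v: "h0 v \<in> verts L \<and> h1 v \<in> verts L" if "v \<in> verts K" for v
  proof -
    have "{v} \<in> simps K" using cpx_vert_simp[OF K that] .
    then have "h0 ` {v} \<union> h1 ` {v} \<in> simps L" using c unfolding contig_def by blast
    then show ?thesis using cpx_simp_verts[OF L] by auto
  qed
  have s: "h0 ` s \<in> simps L \<and> h1 ` s \<in> simps L" if "s \<in> simps K" for s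
  proof -
    have u: "h0 ` s \<union> h1 ` s \<in> simps L" using c that by (simp add: contig_def)
    have "s \<noteq> {}" using K that unfolding is_cpx_def by blast
    then show ?thesis using cpx_closed[OF L u, of "h0 ` s"] cpx_closed[OF L u, of "h1 ` s"] by auto
  qed
  show "cpx_map K L h0" "cpx_map K L h1" using v s by (auto simp: cpx_map_def)
qed

lemma tau_Sing:
  assumes K: "is_cpx K" and L: "is_cpx L" and c: "contig K L h0 h1" and \<sigma>: "\<sigma> \<in> ssimp (Sing K) m"
  shows "tau h0 h1 m \<sigma> \<in> ssimp (Sing L) (2*m+1)"
proof -
  define S where "S = \<sigma> ` {0..m}"
  have S: "S \<in> simps K" unfolding S_def using Sing_memD(3)[OF \<sigma>] .
  define U where "U = h0 ` S \<union> h1 ` S"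
  have U: "U \<in> simps L" unfolding U_def using S c by (simp add: contig_def)
  have inU: "tau h0 h1 m \<sigma> i \<in> U" if "i \<le> 2*m+1" for i
  proof (cases "i \<le> m")
    case True then show ?thesis by (simp add: tau_def U_def S_def)
  next
    case False
    then have "i - Suc m \<le> m" using that by simp
    then have "\<sigma> (i - Suc m) \<in> S" by (simp add: S_def)
    then show ?thesis using False that by (simp add: tau_def U_def)
  qed
  show ?thesis
  proof (rule Sing_memI[OF L])
    show "\<And>i. i \<le> 2*m+1 \<Longrightarrow> tau h0 h1 m \<sigma> i \<in> verts L" using inU cpx_simp_verts[OF L U] by blast
    show "\<And>i. i > 2*m+1 \<Longrightarrow> tau h0 h1 m \<sigma> i = undefined" by (simp add: tau_def)
    have "tau h0 h1 m \<sigma> ` {0..2*m+1} \<subseteq> U" using inU by auto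
    moreover have "tau h0 h1 m \<sigma> ` {0..2*m+1} \<noteq> {}" by simp
    ultimately show "tau h0 h1 m \<sigma> ` {0..2*m+1} \<in> simps L" using cpx_closed[OF L U] by blast
  qed
qed

definition Th :: "nat \<Rightarrow> nat \<Rightarrow> (nat \<Rightarrow> nat) \<Rightarrow> nat \<Rightarrow> nat" where
  "Th m n \<theta> = (\<lambda>i. if i \<le> m then \<theta> i else Suc n + \<theta> (i - Suc m))"

lemma simp_opD: "simp_op m n \<theta> \<Longrightarrow> i \<le> m \<Longrightarrow> \<theta> i \<le> n"
  unfolding simp_op_def by (auto simp: image_subset_iff)

lemma simp_opD2: "simp_op m n \<theta> \<Longrightarrow> i \<le> j \<Longrightarrow> j \<le> m \<Longrightarrow> \<theta> i \<le> \<theta> j"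
  unfolding simp_op_def by (auto intro: monotone_onD)

lemma simp_op_Th:
  assumes th: "simp_op m n \<theta>" shows "simp_op (2*m+1) (2*n+1) (Th m n \<theta>)"
  unfolding simp_op_def
proof
  show "mono_on {0..2 * m + 1} (Th m n \<theta>)"
  proof (rule monotone_onI)
    fix i j assume ij: "i \<in> {0..2*m+1}" "j \<in> {0..2*m+1}" "i \<le> j"
    show "Th m n \<theta> i \<le> Th m n \<theta> j"
    proof (cases "j \<le> m")
      case True
      then show ?thesis using ij simp_opD2[OF th, of i j] by (simp add: Th_def)
    next
      case False
      show ?thesis
      proof (cases "i \<le> m")
        case True
        then show ?thesis using False simp_opD[OF th, of i] by (simp add: Th_def)
      next
        case False2: False
        have "i - Suc m \<le> j - Suc m" "j - Suc m \<le> m" using ij by auto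
        then show ?thesis using False False2 simp_opD2[OF th, of "i - Suc m" "j - Suc m"] by (simp add: Th_def)
      qed
    qed
  qed
  show "Th m n \<theta> ` {0..2 * m + 1} \<subseteq> {0..2 * n + 1}"
  proof
    fix x assume "x \<in> Th m n \<theta> ` {0..2 * m + 1}"
    then obtain i where i: "i \<le> 2*m+1" "x = Th m n \<theta> i" by auto
    show "x \<in> {0..2*n+1}"
    proof (cases "i \<le> m")
      case True then show ?thesis using i simp_opD[OF th, of i] by (simp add: Th_def)
    next
      case False
      then have "i - Suc m \<le> m" using i by simp
      then show ?thesis using False i simp_opD[OF th, of "i - Suc m"] by (simp add: Th_def)
    qed
  qed
qed

lemma sact_tau:
  assumes th: "simp_op m n \<theta>"
  shows "sact (Sing L) (2*m+1) (2*n+1) (Th m n \<theta>) (tau h0 h1 n \<sigma>) = tau h0 h1 m (sact (Sing K) m n \<theta> \<sigma>)"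
proof
  fix i
  show "sact (Sing L) (2*m+1) (2*n+1) (Th m n \<theta>) (tau h0 h1 n \<sigma>) i = tau h0 h1 m (sact (Sing K) m n \<theta> \<sigma>) i"
  proof (cases "i \<le> m")
    case True
    then show ?thesis using simp_opD[OF th, of i] by (simp add: sact_Sing tau_def Th_def)
  next
    case False
    show ?thesis
    proof (cases "i \<le> 2*m+1")
      case True
      then have "i - Suc m \<le> m" by simp
      then show ?thesis using False True simp_opD[OF th, of "i - Suc m"] by (simp add: sact_Sing tau_def Th_def)
    next
      case False2: False
      then show ?thesis using False by (simp add: sact_Sing tau_def Th_def)
    qed
  qed
qed

lemma push_Th:
  assumes th: "simp_op m n \<theta>"
  shows "simplex_push (2*m+1) (Th m n \<theta>) (joinp m s t) = joinp n s (simplex_push m \<theta> t)"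
proof
  fix j
  show "simplex_push (2*m+1) (Th m n \<theta>) (joinp m s t) j = joinp n s (simplex_push m \<theta> t) j"
  proof (cases "j \<le> n")
    case True
    have e: "{i. i \<le> 2*m+1 \<and> Th m n \<theta> i = j} = {i. i \<le> m \<and> \<theta> i = j}"
      using True by (auto simp: Th_def split: if_splits)
    have "simplex_push (2*m+1) (Th m n \<theta>) (joinp m s t) j = (\<Sum>i\<in>{i. i \<le> m \<and> \<theta> i = j}. joinp m s t i)"
      unfolding simplex_push_def e ..
    also have "\<dots> = (\<Sum>i\<in>{i. i \<le> m \<and> \<theta> i = j}. (1 - s) * t i)"
      by (rule sum.cong) (auto simp: joinp_def)
    also have "\<dots> = (1 - s) * simplex_push m \<theta> t j"
      by (simp add: simplex_push_def sum_distrib_left)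
    finally show ?thesis using True by (simp add: joinp_def)
  next
    case False
    show ?thesis
    proof (cases "j \<le> 2*n+1")
      case True
      have e: "{i. i \<le> 2*m+1 \<and> Th m n \<theta> i = j} = (\<lambda>i. i + Suc m) ` {i. i \<le> m \<and> \<theta> i = j - Suc n}"
      proof
        show "{i. i \<le> 2*m+1 \<and> Th m n \<theta> i = j} \<subseteq> (\<lambda>i. i + Suc m) ` {i. i \<le> m \<and> \<theta> i = j - Suc n}"
        proof
          fix i assume i: "i \<in> {i. i \<le> 2*m+1 \<and> Th m n \<theta> i = j}"
          have "\<not> i \<le> m"
          proof
            assume "i \<le> m"
            then have "Th m n \<theta> i \<le> n" using simp_opD[OF th, of i] by (simp add: Th_def)
            then show False using i False by simp
          qed
          then have "i = (i - Suc m) + Suc m" "i - Suc m \<le> m" "\<theta> (i - Suc m) = j - Suc n"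
            using i by (auto simp: Th_def)
          then show "i \<in> (\<lambda>i. i + Suc m) ` {i. i \<le> m \<and> \<theta> i = j - Suc n}" by blast
        qed
        show "(\<lambda>i. i + Suc m) ` {i. i \<le> m \<and> \<theta> i = j - Suc n} \<subseteq> {i. i \<le> 2*m+1 \<and> Th m n \<theta> i = j}"
          using False by (auto simp: Th_def)
      qed
      have "simplex_push (2*m+1) (Th m n \<theta>) (joinp m s t) j = (\<Sum>i\<in>(\<lambda>i. i + Suc m) ` {i. i \<le> m \<and> \<theta> i = j - Suc n}. joinp m s t i)"
        unfolding simplex_push_def e ..
      also have "\<dots> = (\<Sum>i\<in>{i. i \<le> m \<and> \<theta> i = j - Suc n}. joinp m s t (i + Suc m))"
        by (rule sum.reindex_cong[where l = "\<lambda>i. i + Suc m"]) (auto simp: inj_on_def)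
      also have "\<dots> = (\<Sum>i\<in>{i. i \<le> m \<and> \<theta> i = j - Suc n}. s * t i)"
        by (rule sum.cong) (auto simp: joinp_def)
      also have "\<dots> = s * simplex_push m \<theta> t (j - Suc n)"
        by (simp add: simplex_push_def sum_distrib_left)
      finally show ?thesis using True False by (simp add: joinp_def)
    next
      case False2: False
      have e: "{i. i \<le> 2*m+1 \<and> Th m n \<theta> i = j} = {}"
      proof -
        have "Th m n \<theta> i \<le> 2*n+1" if "i \<le> 2*m+1" for i
        proof (cases "i \<le> m")
          case True then show ?thesis using simp_opD[OF th, of i] by (simp add: Th_def)
        next
          case False
          then have "i - Suc m \<le> m" using that by simp
          then show ?thesis using False simp_opD[OF th, of "i - Suc m"] by (simp add: Th_def)
        qed
        then show ?thesis using False2 by fastforce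
      qed
      show ?thesis using False False2 unfolding simplex_push_def e by (simp add: joinp_def)
    qed
  qed
qed



definition Phi :: "('v \<Rightarrow> 'w) \<Rightarrow> ('v \<Rightarrow> 'w) \<Rightarrow> 'w cpx \<Rightarrow> real \<times> (nat \<times> ((nat \<Rightarrow> 'v) \<times> (nat \<Rightarrow> real))) \<Rightarrow> (nat \<times> ((nat \<Rightarrow> 'w) \<times> (nat \<Rightarrow> real))) set" where
  "Phi h0 h1 L = (\<lambda>(s,(m,(\<sigma>,t))). cls (Sing L) (2*m+1, (tau h0 h1 m \<sigma>, joinp m s t)))"

lemma Phi_simp [simp]: "Phi h0 h1 L (s,(m,(\<sigma>,t))) = cls (Sing L) (2*m+1, (tau h0 h1 m \<sigma>, joinp m s t))"
  by (simp add: Phi_def)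

lemma Phi_gen:
  assumes K: "is_cpx K" and L: "is_cpx L" and c: "contig K L h0 h1"
    and g: "(p,q) \<in> real_gen (Sing K)" and p: "p \<in> topspace (real_pre (Sing K))" and q: "q \<in> topspace (real_pre (Sing K))"
    and s: "0 \<le> s" "s \<le> 1"
  shows "Phi h0 h1 L (s,p) = Phi h0 h1 L (s,q)"
proof -
  obtain m n \<theta> \<sigma> t where pe: "p = (m, (sact (Sing K) m n \<theta> \<sigma>, t))" and qe: "q = (n, (\<sigma>, simplex_push m \<theta> t))"
    and th: "simp_op m n \<theta>" and \<sigma>: "\<sigma> \<in> ssimp (Sing K) n" and t: "t \<in> standard_simplex m"
    using g unfolding real_gen_def by blast
  have \<sigma>': "sact (Sing K) m n \<theta> \<sigma> \<in> ssimp (Sing K) m" using p pe by (simp add: topspace_real_pre)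
  have pt: "simplex_push m \<theta> t \<in> standard_simplex n" using q qe by (simp add: topspace_real_pre)
  have g0: "((2*m+1, (sact (Sing L) (2*m+1) (2*n+1) (Th m n \<theta>) (tau h0 h1 n \<sigma>), joinp m s t)),
         (2*n+1, (tau h0 h1 n \<sigma>, simplex_push (2*m+1) (Th m n \<theta>) (joinp m s t)))) \<in> real_gen (Sing L)"
    unfolding real_gen_def using simp_op_Th[OF th] tau_Sing[OF K L c \<sigma>] joinp_ss[OF t s] by blast
  have e1: "sact (Sing L) (2*m+1) (2*n+1) (Th m n \<theta>) (tau h0 h1 n \<sigma>) = tau h0 h1 m (sact (Sing K) m n \<theta> \<sigma>)"
    by (rule sact_tau[OF th])
  have e2: "simplex_push (2*m+1) (Th m n \<theta>) (joinp m s t) = joinp n s (simplex_push m \<theta> t)"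
    by (rule push_Th[OF th])
  have gen: "((2*m+1, (tau h0 h1 m (sact (Sing K) m n \<theta> \<sigma>), joinp m s t)),
         (2*n+1, (tau h0 h1 n \<sigma>, joinp n s (simplex_push m \<theta> t)))) \<in> real_gen (Sing L)"
    using g0 unfolding e1 e2 .
  have "((2*m+1, (tau h0 h1 m (sact (Sing K) m n \<theta> \<sigma>), joinp m s t)),
         (2*n+1, (tau h0 h1 n \<sigma>, joinp n s (simplex_push m \<theta> t)))) \<in> real_rel (Sing L)"
    using gen apply (rule real_rel_gen)
    using tau_Sing[OF K L c \<sigma>'] tau_Sing[OF K L c \<sigma>] joinp_ss[OF t s] joinp_ss[OF pt s] by (auto simp: topspace_real_pre)
  then show ?thesis unfolding pe qe Phi_simp by (simp only: cls_eq_iff)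
qed

lemma Phi_end0:
  assumes K: "is_cpx K" and L: "is_cpx L" and c: "contig K L h0 h1"
    and \<sigma>: "\<sigma> \<in> ssimp (Sing K) m" and t: "t \<in> standard_simplex m"
  shows "Phi h0 h1 L (0,(m,(\<sigma>,t))) = cls (Sing L) (m, (Sing_map h0 m \<sigma>, t))"
proof -
  have th: "simp_op m (2*m+1) (\<lambda>i. i)" unfolding simp_op_def by (auto intro: monotone_onI)
  have sa: "sact (Sing L) m (2*m+1) (\<lambda>i. i) (tau h0 h1 m \<sigma>) = Sing_map h0 m \<sigma>"
    by (auto simp: sact_Sing tau_def Sing_map_def)
  have pu: "simplex_push m (\<lambda>i. i) t = joinp m 0 t"
  proof
    fix j
    have "{i. i \<le> m \<and> i = j} = (if j \<le> m then {j} else {})" by auto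
    then show "simplex_push m (\<lambda>i. i) t j = joinp m 0 t j" by (simp add: simplex_push_def joinp_def)
  qed
  have "((m, (sact (Sing L) m (2*m+1) (\<lambda>i. i) (tau h0 h1 m \<sigma>), t)), (2*m+1, (tau h0 h1 m \<sigma>, simplex_push m (\<lambda>i. i) t)))
        \<in> real_gen (Sing L)"
    unfolding real_gen_def using th tau_Sing[OF K L c \<sigma>] t by blast
  then have gen: "((m, (Sing_map h0 m \<sigma>, t)), (2*m+1, (tau h0 h1 m \<sigma>, joinp m 0 t))) \<in> real_gen (Sing L)"
    by (simp only: sa pu)
  have hom: "sset_hom (Sing K) (Sing L) (Sing_map h0)" by (rule sset_hom_Sing[OF L contig_map(1)[OF K L c]])
  have "((m, (Sing_map h0 m \<sigma>, t)), (2*m+1, (tau h0 h1 m \<sigma>, joinp m 0 t))) \<in> real_rel (Sing L)"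
    using gen apply (rule real_rel_gen)
    using hom \<sigma> t tau_Sing[OF K L c \<sigma>] joinp_ss[OF t, of 0] by (auto simp: topspace_real_pre sset_hom_def)
  then show ?thesis unfolding Phi_simp by (simp only: cls_eq_iff real_rel_sym)
qed

lemma Phi_end1:
  assumes K: "is_cpx K" and L: "is_cpx L" and c: "contig K L h0 h1"
    and \<sigma>: "\<sigma> \<in> ssimp (Sing K) m" and t: "t \<in> standard_simplex m"
  shows "Phi h0 h1 L (1,(m,(\<sigma>,t))) = cls (Sing L) (m, (Sing_map h1 m \<sigma>, t))"
proof -
  have th: "simp_op m (2*m+1) (\<lambda>i. i + Suc m)" unfolding simp_op_def by (auto intro: monotone_onI)
  have sa: "sact (Sing L) m (2*m+1) (\<lambda>i. i + Suc m) (tau h0 h1 m \<sigma>) = Sing_map h1 m \<sigma>"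
    by (auto simp: sact_Sing tau_def Sing_map_def)
  have pu: "simplex_push m (\<lambda>i. i + Suc m) t = joinp m 1 t"
  proof
    fix j
    have "{i. i \<le> m \<and> i + Suc m = j} = (if Suc m \<le> j \<and> j \<le> 2*m+1 then {j - Suc m} else {})" by auto
    then show "simplex_push m (\<lambda>i. i + Suc m) t j = joinp m 1 t j" by (simp add: simplex_push_def joinp_def)
  qed
  have "((m, (sact (Sing L) m (2*m+1) (\<lambda>i. i + Suc m) (tau h0 h1 m \<sigma>), t)), (2*m+1, (tau h0 h1 m \<sigma>, simplex_push m (\<lambda>i. i + Suc m) t)))
        \<in> real_gen (Sing L)"
    unfolding real_gen_def using th tau_Sing[OF K L c \<sigma>] t by blast
  then have gen: "((m, (Sing_map h1 m \<sigma>, t)), (2*m+1, (tau h0 h1 m \<sigma>, joinp m 1 t))) \<in> real_gen (Sing L)"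
    by (simp only: sa pu)
  have hom: "sset_hom (Sing K) (Sing L) (Sing_map h1)" by (rule sset_hom_Sing[OF L contig_map(2)[OF K L c]])
  have "((m, (Sing_map h1 m \<sigma>, t)), (2*m+1, (tau h0 h1 m \<sigma>, joinp m 1 t))) \<in> real_rel (Sing L)"
    using gen apply (rule real_rel_gen)
    using hom \<sigma> t tau_Sing[OF K L c \<sigma>] joinp_ss[OF t, of 1] by (auto simp: topspace_real_pre sset_hom_def)
  then show ?thesis unfolding Phi_simp by (simp only: cls_eq_iff real_rel_sym)
qed



lemma joinp_cont:
  "continuous_map (prod_topology (top_of_set {0..1::real}) (simplex_top n)) (simplex_top (2*n+1)) (\<lambda>(z,t). joinp n z t)"
proof -
  let ?X = "prod_topology (top_of_set {0..1::real}) (simplex_top n)"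
  have cz: "continuous_map ?X euclideanreal fst"
    by (rule continuous_map_into_fulltopology[OF continuous_map_fst])
  have ct: "continuous_map ?X euclideanreal (\<lambda>x. snd x i)" for i
  proof -
    have "continuous_map (simplex_top n) euclideanreal (\<lambda>t. t i)"
      unfolding simplex_top_def by (rule continuous_map_from_subtopology[OF continuous_map_product_projection]) simp
    then show ?thesis using continuous_map_compose[OF continuous_map_snd] by (simp add: o_def)
  qed
  have comp: "continuous_map ?X euclideanreal (\<lambda>x. (\<lambda>(z,t). joinp n z t) x k)" for k
  proof (cases "k \<le> n")
    case True
    have "continuous_map ?X euclideanreal (\<lambda>x. (1 - fst x) * snd x k)"
      by (intro continuous_map_real_mult continuous_map_diff continuous_map_canonical_const cz ct)
    then show ?thesis using True by (simp add: joinp_def case_prod_unfold)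
  next
    case False
    show ?thesis
    proof (cases "k \<le> 2*n+1")
      case True
      have "continuous_map ?X euclideanreal (\<lambda>x. fst x * snd x (k - Suc n))"
        by (intro continuous_map_real_mult cz ct)
      then show ?thesis using True False by (simp add: joinp_def case_prod_unfold)
    next
      case False2: False
      then show ?thesis using False by (simp add: joinp_def case_prod_unfold)
    qed
  qed
  have img: "(\<lambda>(z,t). joinp n z t) ` topspace ?X \<subseteq> standard_simplex (2*n+1)"
    using joinp_ss by (auto simp: simplex_top_def)
  show ?thesis
    unfolding simplex_top_def continuous_map_in_subtopology
    using comp img by (simp add: continuous_map_componentwise_UNIV simplex_top_def Pi_iff image_subset_iff)
qed

lemma Phi_cont:
  assumes K: "is_cpx K" and L: "is_cpx L" and c: "contig K L h0 h1"
  shows "continuous_map (prod_topology (top_of_set {0..1::real}) (real_pre (Sing K))) (realization (Sing L)) (Phi h0 h1 L)"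
  unfolding real_pre_def
proof (rule cont_prod_sum_discrete)
  fix n \<sigma> assume \<sigma>: "\<sigma> \<in> ssimp (Sing K) n"
  let ?X = "prod_topology (top_of_set {0..1::real}) (simplex_top n)"
  have p: "continuous_map ?X (prod_topology (discrete_topology (ssimp (Sing L) (2*n+1))) (simplex_top (2*n+1)))
            (\<lambda>x. (tau h0 h1 n \<sigma>, (\<lambda>(z,t). joinp n z t) x))"
    unfolding continuous_map_pairwise o_def using tau_Sing[OF K L c \<sigma>] joinp_cont by simp
  have inj: "continuous_map (prod_topology (discrete_topology (ssimp (Sing L) (2*n+1))) (simplex_top (2*n+1))) (real_pre (Sing L))
            (\<lambda>x. (2*n+1, x))"
    unfolding real_pre_def by (rule continuous_map_component_injection) simp
  have "continuous_map ?X (realization (Sing L)) (cls (Sing L) \<circ> ((\<lambda>x. (2*n+1, x)) \<circ> (\<lambda>x. (tau h0 h1 n \<sigma>, (\<lambda>(z,t). joinp n z t) x))))"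
    by (intro continuous_map_compose[OF _ quotient_imp_continuous_map[OF quotient_map_cls]] continuous_map_compose[OF p inj])
  moreover have "(cls (Sing L) \<circ> ((\<lambda>x. (2*n+1, x)) \<circ> (\<lambda>x. (tau h0 h1 n \<sigma>, (\<lambda>(z,t). joinp n z t) x))))
     = (\<lambda>(z, t). Phi h0 h1 L (z, n, \<sigma>, t))"
    by (auto simp: fun_eq_iff)
  ultimately show "continuous_map ?X (realization (Sing L)) (\<lambda>(z, t). Phi h0 h1 L (z, n, \<sigma>, t))" by simp
qed

lemma contig_homotopic:
  assumes K: "is_cpx K" and L: "is_cpx L" and c: "contig K L h0 h1"
  shows "homotopic_with (\<lambda>h. True) (realization (Sing K)) (realization (Sing L))
           (realization_map (Sing L) (Sing_map h0)) (realization_map (Sing L) (Sing_map h1))"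
proof -
  let ?Z = "top_of_set {0..1::real}"
  have lc: "locally_compact_space ?Z"
    by (rule locally_compact_space_closed_subset[OF locally_compact_space_euclidean]) (simp add: closed_closedin[symmetric])
  have hs: "Hausdorff_space ?Z \<or> regular_space ?Z"
    by (simp add: Hausdorff_space_subtopology)
  have q: "quotient_map (prod_topology ?Z (real_pre (Sing K))) (prod_topology ?Z (realization (Sing K))) (\<lambda>(x,y). (x, cls (Sing K) y))"
    by (rule quotient_map_prod_right[OF lc hs quotient_map_cls])
  define H where "H = (\<lambda>(s::real, C). Phi h0 h1 L (s, SOME p. p \<in> C))"
  have inv: "Phi h0 h1 L (s, p') = Phi h0 h1 L (s, p)"
    if s: "s \<in> {0..1}" and p: "p \<in> topspace (real_pre (Sing K))" and p': "p' \<in> cls (Sing K) p" for s p p'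
  proof -
    have r: "(p,p') \<in> real_rel (Sing K)" using p' by (simp add: cls_def)
    have "Phi h0 h1 L (s, p) = Phi h0 h1 L (s, p')"
      using r by (rule real_rel_invariant[where F = "\<lambda>x. Phi h0 h1 L (s, x)"]) (use Phi_gen[OF K L c] s in auto)
    then show ?thesis by simp
  qed
  have Hq: "H ((\<lambda>(x,y). (x, cls (Sing K) y)) z) = Phi h0 h1 L z"
    if z: "z \<in> topspace (prod_topology ?Z (real_pre (Sing K)))" for z
  proof -
    obtain s p where ze: "z = (s,p)" and s: "s \<in> {0..1}" and p: "p \<in> topspace (real_pre (Sing K))"
      using z by auto
    have "(SOME x. x \<in> cls (Sing K) p) \<in> cls (Sing K) p" by (rule someI[of _ p]) (rule cls_self)
    then show ?thesis unfolding ze H_def using inv[OF s p] by simp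
  qed
  have contH: "continuous_map (prod_topology ?Z (realization (Sing K))) (realization (Sing L)) H"
  proof (rule continuous_compose_quotient_map[OF q])
    show "continuous_map (prod_topology ?Z (real_pre (Sing K))) (realization (Sing L)) (H \<circ> (\<lambda>(x, y). (x, cls (Sing K) y)))"
      using Phi_cont[OF K L c] by (rule continuous_map_eq) (simp add: Hq)
  qed
  have end0: "H (0, C) = realization_map (Sing L) (Sing_map h0) C"
    and end1: "H (1, C) = realization_map (Sing L) (Sing_map h1) C"
    if C: "C \<in> topspace (realization (Sing K))" for C
  proof -
    obtain p where p: "p \<in> topspace (real_pre (Sing K))" and Ce: "C = cls (Sing K) p"
      using realization_topspace_cls[OF C] by blast
    obtain m \<sigma> t where pe: "p = (m,(\<sigma>,t))" and \<sigma>: "\<sigma> \<in> ssimp (Sing K) m" and t: "t \<in> standard_simplex m"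
      using p by (auto simp: topspace_real_pre)
    have hom0: "sset_hom (Sing K) (Sing L) (Sing_map h0)" by (rule sset_hom_Sing[OF L contig_map(1)[OF K L c]])
    have hom1: "sset_hom (Sing K) (Sing L) (Sing_map h1)" by (rule sset_hom_Sing[OF L contig_map(2)[OF K L c]])
    have "H (0, C) = Phi h0 h1 L (0, p)" using Hq[of "(0,p)"] p unfolding Ce by simp
    also have "\<dots> = cls (Sing L) (m, (Sing_map h0 m \<sigma>, t))" unfolding pe by (rule Phi_end0[OF K L c \<sigma> t])
    also have "\<dots> = realization_map (Sing L) (Sing_map h0) C"
      using realization_map_cls[OF hom0 p] unfolding Ce pe by simp
    finally show "H (0, C) = realization_map (Sing L) (Sing_map h0) C" .
    have "H (1, C) = Phi h0 h1 L (1, p)" using Hq[of "(1,p)"] p unfolding Ce by simp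
    also have "\<dots> = cls (Sing L) (m, (Sing_map h1 m \<sigma>, t))" unfolding pe by (rule Phi_end1[OF K L c \<sigma> t])
    also have "\<dots> = realization_map (Sing L) (Sing_map h1) C"
      using realization_map_cls[OF hom1 p] unfolding Ce pe by simp
    finally show "H (1, C) = realization_map (Sing L) (Sing_map h1) C" .
  qed
  have iff: "homotopic_with (\<lambda>h. True) (realization (Sing K)) (realization (Sing L))
           (realization_map (Sing L) (Sing_map h0)) (realization_map (Sing L) (Sing_map h1)) \<longleftrightarrow>
       (\<exists>h. continuous_map (prod_topology ?Z (realization (Sing K))) (realization (Sing L)) h \<and>
              (\<forall>x \<in> topspace (realization (Sing K)). h(0,x) = realization_map (Sing L) (Sing_map h0) x) \<and>
              (\<forall>x \<in> topspace (realization (Sing K)). h(1,x) = realization_map (Sing L) (Sing_map h1) x) \<and>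
              (\<forall>t \<in> {0..1}. (\<lambda>h. True) (\<lambda>x. h(t, x))))"
    by (rule homotopic_with) simp
  show ?thesis unfolding iff using contH end0 end1 by blast
qed



lemma cpx_map_comp: "cpx_map K L f \<Longrightarrow> cpx_map L M g \<Longrightarrow> cpx_map K M (g \<circ> f)"
  unfolding cpx_map_def by (metis comp_apply image_comp)

lemma cpx_map_id: "cpx_map K K id"
  unfolding cpx_map_def by simp

lemma sset_hom_comp:
  assumes "sset_hom X Y \<phi>" "sset_hom Y Z ch" shows "sset_hom X Z (\<lambda>n. ch n \<circ> \<phi> n)"
  using assms unfolding sset_hom_def by simp

lemma realization_map_comp:
  assumes h1: "sset_hom X Y \<phi>" and h2: "sset_hom Y Z ch" and C: "C \<in> topspace (realization X)"
  shows "realization_map Z ch (realization_map Y \<phi> C) = realization_map Z (\<lambda>n. ch n \<circ> \<phi> n) C"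
proof -
  obtain p where p: "p \<in> topspace (real_pre X)" and Ce: "C = cls X p"
    using realization_topspace_cls[OF C] by blast
  have "realization_map Z ch (realization_map Y \<phi> C) = cls Z (psi ch (psi \<phi> p))"
    unfolding Ce realization_map_cls[OF h1 p] realization_map_cls[OF h2 psi_topspace[OF h1 p]] ..
  also have "\<dots> = cls Z (psi (\<lambda>n. ch n \<circ> \<phi> n) p)"
    by (cases p) auto
  also have "\<dots> = realization_map Z (\<lambda>n. ch n \<circ> \<phi> n) C"
    unfolding Ce realization_map_cls[OF sset_hom_comp[OF h1 h2] p] ..
  finally show ?thesis .
qed

lemma realization_map_id:
  assumes K: "is_cpx K" and C: "C \<in> topspace (realization (Sing K))"
  shows "realization_map (Sing K) (Sing_map id) C = C"
proof -
  obtain p where p: "p \<in> topspace (real_pre (Sing K))" and Ce: "C = cls (Sing K) p"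
    using realization_topspace_cls[OF C] by blast
  obtain m \<sigma> t where pe: "p = (m,(\<sigma>,t))" and \<sigma>: "\<sigma> \<in> ssimp (Sing K) m"
    using p by (auto simp: topspace_real_pre)
  have "realization_map (Sing K) (Sing_map id) C = cls (Sing K) (psi (Sing_map id) p)"
    unfolding Ce by (rule realization_map_cls[OF sset_hom_Sing[OF K cpx_map_id] p])
  also have "psi (Sing_map id) p = p" unfolding pe using Sing_map_id[OF \<sigma>] by simp
  finally show ?thesis unfolding Ce .
qed

lemma contig_step:
  assumes K: "is_cpx K" and Hm: "cpx_map (cpx_prod K (interval_cpx n)) L H" and i: "i < n"
  shows "contig K L (\<lambda>v. H (v,i)) (\<lambda>v. H (v, Suc i))"
  unfolding contig_def
proof
  fix s assume s: "s \<in> simps K"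
  have ne: "s \<noteq> {}" and fin: "finite s" and sub: "s \<subseteq> verts K" using K s unfolding is_cpx_def by blast+
  have f: "fst ` (s \<times> {i, Suc i}) = s" using ne by auto
  have sn: "snd ` (s \<times> {i, Suc i}) = {i, Suc i}" using ne by auto
  have int: "{i, Suc i} \<in> simps (interval_cpx n)" using i by (auto simp: interval_cpx_def simps_def)
  have "s \<times> {i, Suc i} \<in> simps (cpx_prod K (interval_cpx n))"
    unfolding cpx_prod_def simps_def[of "(_, _)"] using ne fin sub i s int f sn
    by (auto simp: verts_def interval_cpx_def simps_def)
  then have "H ` (s \<times> {i, Suc i}) \<in> simps L" using Hm by (simp add: cpx_map_def)
  moreover have "H ` (s \<times> {i, Suc i}) = (\<lambda>v. H (v,i)) ` s \<union> (\<lambda>v. H (v, Suc i)) ` s" by auto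
  ultimately show "(\<lambda>v. H (v,i)) ` s \<union> (\<lambda>v. H (v, Suc i)) ` s \<in> simps L" by simp
qed

lemma times_homotopic_real:
  assumes K: "is_cpx K" and L: "is_cpx L" and th: "times_homotopic K L a b"
  shows "homotopic_with (\<lambda>h. True) (realization (Sing K)) (realization (Sing L))
           (realization_map (Sing L) (Sing_map a)) (realization_map (Sing L) (Sing_map b))"
proof -
  obtain n H where n: "n \<ge> 1" and Hm: "cpx_map (cpx_prod K (interval_cpx n)) L H"
    and e: "\<And>v. v \<in> verts K \<Longrightarrow> H (v,0) = a v \<and> H (v,n) = b v"
    using th unfolding times_homotopic_def by blast
  define h where "h i = (\<lambda>v. H (v,i))" for i
  have step: "contig K L (h i) (h (Suc i))" if "i < n" for i
    unfolding h_def by (rule contig_step[OF K Hm that])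
  have ind: "homotopic_with (\<lambda>h. True) (realization (Sing K)) (realization (Sing L))
           (realization_map (Sing L) (Sing_map (h 0))) (realization_map (Sing L) (Sing_map (h i)))" if "i \<le> n" for i
    using that
  proof (induction i)
    case 0
    have "contig K L (h 0) (h (Suc 0))" using step n by simp
    then have "continuous_map (realization (Sing K)) (realization (Sing L)) (realization_map (Sing L) (Sing_map (h 0)))"
      by (intro cont_realization_map sset_hom_Sing[OF L] contig_map(1)[OF K L])
    then show ?case by simp
  next
    case (Suc i)
    then have "i < n" by simp
    show ?case using Suc.IH[OF less_imp_le[OF \<open>i < n\<close>]] contig_homotopic[OF K L step[OF \<open>i < n\<close>]]
      by (rule homotopic_with_trans)
  qed
  have hn: "homotopic_with (\<lambda>h. True) (realization (Sing K)) (realization (Sing L))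
           (realization_map (Sing L) (Sing_map (h 0))) (realization_map (Sing L) (Sing_map (h n)))"
    using ind by simp
  show ?thesis
  proof (rule homotopic_with_eq[OF hn])
    fix x assume x: "x \<in> topspace (realization (Sing K))"
    show "realization_map (Sing L) (Sing_map a) x = realization_map (Sing L) (Sing_map (h 0)) x"
      by (rule realization_map_cong[OF _ x]) (rule Sing_map_cong, assumption, simp add: h_def e)
    show "realization_map (Sing L) (Sing_map b) x = realization_map (Sing L) (Sing_map (h n)) x"
      by (rule realization_map_cong[OF _ x]) (rule Sing_map_cong, assumption, simp add: h_def e)
  qed simp
qed

theorem proposition2p36:
  fixes K :: "'v cpx" and L :: "'w cpx" and f :: "'v \<Rightarrow> 'w"
  assumes "is_cpx K" and "is_cpx L"
    and "times_htpy_equiv K L f"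
  shows "sset_weak_equiv (Sing K) (Sing L) (Sing_map f)"
proof -
  note K = assms(1) and L = assms(2)
  obtain g where fm: "cpx_map K L f" and gm: "cpx_map L K g"
    and hK: "times_homotopic K K (g \<circ> f) id" and hL: "times_homotopic L L (f \<circ> g) id"
    using assms(3) unfolding times_htpy_equiv_def by blast
  have homf: "sset_hom (Sing K) (Sing L) (Sing_map f)" by (rule sset_hom_Sing[OF L fm])
  have homg: "sset_hom (Sing L) (Sing K) (Sing_map g)" by (rule sset_hom_Sing[OF K gm])
  define F where "F = realization_map (Sing L) (Sing_map f)"
  define G where "G = realization_map (Sing K) (Sing_map g)"
  have cF: "continuous_map (realization (Sing K)) (realization (Sing L)) F"
    unfolding F_def by (rule cont_realization_map[OF homf])
  have cG: "continuous_map (realization (Sing L)) (realization (Sing K)) G"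
    unfolding G_def by (rule cont_realization_map[OF homg])
  have c1: "(\<lambda>n. Sing_map g n \<circ> Sing_map f n) = Sing_map (g \<circ> f)"
    by (auto simp: fun_eq_iff Sing_map_comp[unfolded comp_def] Sing_map_def)
  have c2: "(\<lambda>n. Sing_map f n \<circ> Sing_map g n) = Sing_map (f \<circ> g)"
    by (auto simp: fun_eq_iff Sing_map_def)
  have GF: "homotopic_with (\<lambda>h. True) (realization (Sing K)) (realization (Sing K)) (G \<circ> F) id"
  proof (rule homotopic_with_eq[OF times_homotopic_real[OF K K hK]])
    fix x assume x: "x \<in> topspace (realization (Sing K))"
    show "(G \<circ> F) x = realization_map (Sing K) (Sing_map (g \<circ> f)) x"
      unfolding F_def G_def comp_apply realization_map_comp[OF homf homg x] c1 ..
    show "id x = realization_map (Sing K) (Sing_map id) x"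
      using realization_map_id[OF K x] by simp
  qed simp
  have FG: "homotopic_with (\<lambda>h. True) (realization (Sing L)) (realization (Sing L)) (F \<circ> G) id"
  proof (rule homotopic_with_eq[OF times_homotopic_real[OF L L hL]])
    fix x assume x: "x \<in> topspace (realization (Sing L))"
    show "(F \<circ> G) x = realization_map (Sing L) (Sing_map (f \<circ> g)) x"
      unfolding F_def G_def comp_apply realization_map_comp[OF homg homf x] c2 ..
    show "id x = realization_map (Sing L) (Sing_map id) x"
      using realization_map_id[OF L x] by simp
  qed simp
  show ?thesis
    unfolding sset_weak_equiv_def Let_def F_def[symmetric]
    using cF cG GF FG by blast
qed

end
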